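(* Let $\epsilon,\delta>0$ and let $\mathrm{Unlearn}$ be an $(\epsilon,\delta)$-certified removal unlearning algorithm (with respect to the learning algorithm $\mathrm{Learn}$ and the finite dataset $\mathcal{D}$). Then for any (not necessarily efficient) adversary $\mathcal{A}$ in the unlearning sample inference game with parameters $\mathcal{D},\mathbb{P}_{\mathcal{D}},\alpha$, $$\mathrm{Adv}(\mathcal{A},\mathrm{Unlearn})\le 2\Big(1-\frac{2-2\delta}{e^{\epsilon}+1}\Big).$$ Consequently $\mathcal{Q}(\mathrm{Unlearn})\ge \frac{4-4\delta}{e^{\epsilon}+1}-1$.
   Context: Unlearning sample inference game. $\mathcal{D}$ is a finite dataset with a "sensitivity distribution" $\mathbb{P}_{\mathcal{D}}$ on $\mathcal{D}$ (assumed to have full support), and $\alpha\in(0,1)$ is the unlearning portion. $\mathcal{S}_\alpha$ is the (finite, assumed nonempty) set of all ordered triples $s=(\mathcal{R},\mathcal{F},\mathcal{T})$ of pairwise disjoint subsets of $\mathcal{D}$ with $\mathcal{R}\cup\mathcal{F}\cup\mathcal{T}=\mathcal{D}$, $|\mathcal{F}|/|\mathcal{R}\cup\mathcal{F}|=\alpha$ and $|\mathcal{F}|=|\mathcal{T}|$. For $s\in\mathcal{S}_\alpha$ and $b\in\{0,1\}$, the random oracle $\mathcal{O}_s(b)$, each time it is queried, returns an independent sample from $\mathbb{P}_{\mathcal{D}}$ conditioned on $\mathcal{F}$ if $b=0$, and conditioned on $\mathcal{T}$ if $b=1$. A learning algorithm $\mathrm{Learn}$ is a randomized map from datasets to models;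 an unlearning algorithm $\mathrm{Unlearn}$ is a randomized map taking a model and a subset of data and returning a model; $\mathrm{Retrain}$ denotes the method with $\mathrm{Retrain}(\mathrm{Learn}(\mathcal{R}\cup\mathcal{F}),\mathcal{F})=\mathrm{Learn}(\mathcal{R})$. For $s=(\mathcal{R},\mathcal{F},\mathcal{T})$, $\mathbb{P}_{\mathcal{M}}(\mathrm{Unlearn},s)$ is the distribution of $\mathrm{Unlearn}(\mathrm{Learn}(\mathcal{R}\cup\mathcal{F}),\mathcal{F})$. An adversary $\mathcal{A}$ is a (possibly randomized) algorithm given access to a model $m$ and an oracle $\mathcal{O}$ (queried repeatedly, independent of $m$ given $s$), outputting a bit $\mathcal{A}^{\mathcal{O}}(m)$. The advantage is $$\mathrm{Adv}(\mathcal{A},\mathrm{Unlearn})=\frac{1}{|\mathcal{S}_\alpha|}\Big|\sum_{s\in\mathcal{S}_\alpha}\Pr_{m\sim\mathbb{P}_{\mathcal{M}}(\mathrm{Unlearn},s),\,\mathcal{O}=\mathcal{O}_s(0)}(\mathcal{A}^{\mathcal{O}}(m)=1)-\sum_{s\in\mathcal{S}_\alpha}\Pr_{m\sim\mathbb{P}_{\mathcal{M}}(\mathrm{Unlearn},s),\,\mathcal{O}=\mathcal{O}_s(1)}(\mathcal{A}^{\mathcal{O}}(m)=1)\Big|,$$ and $\mathcal{Q}(\mathrm{Unlearn})=1-\sup_{\mathcal{A}}\mathrm{Adv}(\mathcal{A},\mathrm{Unlearn})$. Certified removal: letting $\mathcal{H}$ be the set of all models producible by $\mathrm{Learn}$ and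 $\mathrm{Unlearn}$, $\mathrm{Unlearn}$ is $(\epsilon,\delta)$-certified removal if for every measurable $\mathcal{W}\subseteq\mathcal{H}$ and every pair of disjoint $\mathcal{R},\mathcal{F}\subseteq\mathcal{D}$ (no size constraints), $\Pr(\mathrm{Unlearn}(\mathrm{Learn}(\mathcal{R}\cup\mathcal{F}),\mathcal{F})\in\mathcal{W})\le e^{\epsilon}\Pr(\mathrm{Learn}(\mathcal{R})\in\mathcal{W})+\delta$ and $\Pr(\mathrm{Learn}(\mathcal{R})\in\mathcal{W})\le e^{\epsilon}\Pr(\mathrm{Unlearn}(\mathrm{Learn}(\mathcal{R}\cup\mathcal{F}),\mathcal{F})\in\mathcal{W})+\delta$. *)

theory Defs
  imports "HOL-Probability.Probability"
begin

definition splits :: "'d set \<Rightarrow> real \<Rightarrow> ('d set \<times> 'd set \<times> 'd set) set" where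
  "splits D \<alpha> = {(R, F, T). R \<union> F \<union> T = D \<and> R \<inter> F = {} \<and> R \<inter> T = {} \<and> F \<inter> T = {}
      \<and> real (card F) / real (card (R \<union> F)) = \<alpha> \<and> card F = card T}"

definition transcript_space :: "(nat \<Rightarrow> 'd) measure" where
  "transcript_space = PiM UNIV (\<lambda>_. count_space UNIV)"

definition query_oracle :: "'d pmf \<Rightarrow> 'd set \<Rightarrow> (nat \<Rightarrow> 'd) measure" where
  "query_oracle P X = PiM UNIV (\<lambda>_. measure_pmf (cond_pmf P X))"

definition unlearned_dist ::
  "('d set \<Rightarrow> 'm measure) \<Rightarrow> ('m \<Rightarrow> 'd set \<Rightarrow> 'm measure) \<Rightarrow> 'd set \<Rightarrow> 'd set \<Rightarrow> 'm measure" where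
  "unlearned_dist Learn Unlearn R F = Learn (R \<union> F) \<bind> (\<lambda>m. Unlearn m F)"

definition certified_removal ::
  "'m measure \<Rightarrow> ('d set \<Rightarrow> 'm measure) \<Rightarrow> ('m \<Rightarrow> 'd set \<Rightarrow> 'm measure) \<Rightarrow> 'd set
   \<Rightarrow> real \<Rightarrow> real \<Rightarrow> bool" where
  "certified_removal M Learn Unlearn D \<epsilon> \<delta> \<longleftrightarrow>
     (\<forall>R F W. R \<subseteq> D \<longrightarrow> F \<subseteq> D \<longrightarrow> R \<inter> F = {} \<longrightarrow> W \<in> sets M \<longrightarrow>
        measure (unlearned_dist Learn Unlearn R F) W \<le> exp \<epsilon> * measure (Learn R) W + \<delta> \<and>
        measure (Learn R) W \<le> exp \<epsilon> * measure (unlearned_dist Learn Unlearn R F) W + \<delta>)"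

text \<open>A (possibly randomized) adversary is represented by the probability A m \<omega> with which it
  outputs 1, given the model m and the stream \<omega> of answers of the query oracle (any adaptive query strategy
  only looks at a finite prefix of this stream); its internal randomness is absorbed in A.\<close>
definition adversaries :: "'m measure \<Rightarrow> ('m \<Rightarrow> (nat \<Rightarrow> 'd) \<Rightarrow> real) set" where
  "adversaries M = {A. case_prod A \<in> borel_measurable (M \<Otimes>\<^sub>M transcript_space)
                        \<and> (\<forall>m \<omega>. 0 \<le> A m \<omega> \<and> A m \<omega> \<le> 1)}"

definition out1_prob :: "('m \<Rightarrow> (nat \<Rightarrow> 'd) \<Rightarrow> real) \<Rightarrow> 'm measure \<Rightarrow> (nat \<Rightarrow> 'd) measure \<Rightarrow> real" where
  "out1_prob A Mdist Od = (\<integral>x. case_prod A x \<partial>(Mdist \<Otimes>\<^sub>M Od))"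

definition advantage ::
  "'d set \<Rightarrow> 'd pmf \<Rightarrow> real \<Rightarrow> ('d set \<Rightarrow> 'm measure) \<Rightarrow> ('m \<Rightarrow> 'd set \<Rightarrow> 'm measure)
   \<Rightarrow> ('m \<Rightarrow> (nat \<Rightarrow> 'd) \<Rightarrow> real) \<Rightarrow> real" where
  "advantage D P \<alpha> Learn Unlearn A =
     (1 / real (card (splits D \<alpha>))) *
     \<bar>(\<Sum>(R, F, T)\<in>splits D \<alpha>. out1_prob A (unlearned_dist Learn Unlearn R F) (query_oracle P F))
      - (\<Sum>(R, F, T)\<in>splits D \<alpha>. out1_prob A (unlearned_dist Learn Unlearn R F) (query_oracle P T))\<bar>"

definition quality ::
  "'m measure \<Rightarrow> 'd set \<Rightarrow> 'd pmf \<Rightarrow> real \<Rightarrow> ('d set \<Rightarrow> 'm measure) \<Rightarrow> ('m \<Rightarrow> 'd set \<Rightarrow> 'm measure) \<Rightarrow> real" where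
  "quality M D P \<alpha> Learn Unlearn = 1 - (SUP A\<in>adversaries M. advantage D P \<alpha> Learn Unlearn A)"

end

theory Submission
  imports Defs
begin


lemma layer_cake:
  assumes N: "prob_space N" and h[measurable]: "h \<in> borel_measurable N"
    and h0: "\<And>x. 0 \<le> h x" and h1: "\<And>x. h x \<le> 1"
  shows "(\<integral>\<^sup>+x. ennreal (h x) \<partial>N) =
    (\<integral>\<^sup>+t. indicator {0..1} t * emeasure N {x\<in>space N. t < h x} \<partial>lborel)"
proof -
  interpret N: prob_space N by fact
  interpret P: pair_sigma_finite lborel N by unfold_locales
  define f where "f = (\<lambda>(t::real) x. indicator {0..1} t * (if t < h x then 1 else 0::ennreal))"
  have fm: "case_prod f \<in> borel_measurable (lborel \<Otimes>\<^sub>M N)"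
    unfolding f_def by measurable
  have "(\<integral>\<^sup>+x. ennreal (h x) \<partial>N) = (\<integral>\<^sup>+x. (\<integral>\<^sup>+t. f t x \<partial>lborel) \<partial>N)"
  proof (rule nn_integral_cong)
    fix x
    have "(\<lambda>t. f t x) = indicator {0..<h x}"
      using h1[of x] by (auto simp: f_def indicator_def fun_eq_iff)
    then show "ennreal (h x) = (\<integral>\<^sup>+t. f t x \<partial>lborel)"
      using h0[of x] by simp
  qed
  also have "\<dots> = (\<integral>\<^sup>+t. (\<integral>\<^sup>+x. f t x \<partial>N) \<partial>lborel)"
    using P.Fubini'[OF fm] by simp
  also have "\<dots> = (\<integral>\<^sup>+t. indicator {0..1} t * emeasure N {x\<in>space N. t < h x} \<partial>lborel)"
  proof (rule nn_integral_cong)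
    fix t :: real
    have "(\<integral>\<^sup>+x. f t x \<partial>N) = indicator {0..1} t * (\<integral>\<^sup>+x. (if t < h x then 1 else 0::ennreal) \<partial>N)"
      unfolding f_def by (simp add: nn_integral_cmult)
    also have "(\<integral>\<^sup>+x. (if t < h x then 1 else 0::ennreal) \<partial>N) = (\<integral>\<^sup>+x. indicator {x\<in>space N. t < h x} x \<partial>N)"
      by (rule nn_integral_cong) (auto simp: indicator_def)
    also have "\<dots> = emeasure N {x\<in>space N. t < h x}"
      by (rule nn_integral_indicator) measurable
    finally show "(\<integral>\<^sup>+x. f t x \<partial>N) = indicator {0..1} t * emeasure N {x\<in>space N. t < h x}" .
  qed
  finally show ?thesis .
qed



lemma fun_bound:
  assumes mu: "prob_space \<mu>" and nu: "prob_space \<nu>" and smu: "sets \<mu> = sets M" and snu: "sets \<nu> = sets M"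
    and c: "0 \<le> c" and W: "\<And>W. W \<in> sets M \<Longrightarrow> measure \<mu> W \<le> measure \<nu> W + c"
    and h[measurable]: "h \<in> borel_measurable M" and h0: "\<And>x. 0 \<le> h x" and h1: "\<And>x. h x \<le> 1"
  shows "(\<integral>x. h x \<partial>\<mu>) \<le> (\<integral>x. h x \<partial>\<nu>) + c"
proof -
  interpret mu: prob_space \<mu> by fact
  interpret nu: prob_space \<nu> by fact
  have spmu: "space \<mu> = space M" and spnu: "space \<nu> = space M"
    using sets_eq_imp_space_eq[OF smu] sets_eq_imp_space_eq[OF snu] by auto
  have hmu[measurable]: "h \<in> borel_measurable \<mu>" using h smu by (simp cong: measurable_cong_sets)
  have hnu[measurable]: "h \<in> borel_measurable \<nu>" using h snu by (simp cong: measurable_cong_sets)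
  define S where "S t = {x\<in>space M. t < h x}" for t
  have S[measurable]: "S t \<in> sets M" for t unfolding S_def by measurable
  have lc_mu: "(\<integral>\<^sup>+x. ennreal (h x) \<partial>\<mu>) = (\<integral>\<^sup>+t. indicator {0..1} t * emeasure \<mu> (S t) \<partial>lborel)"
    using layer_cake[OF mu hmu h0 h1] by (simp add: S_def spmu)
  have lc_nu: "(\<integral>\<^sup>+x. ennreal (h x) \<partial>\<nu>) = (\<integral>\<^sup>+t. indicator {0..1} t * emeasure \<nu> (S t) \<partial>lborel)"
    using layer_cake[OF nu hnu h0 h1] by (simp add: S_def spnu)
  have meas: "(\<lambda>t. emeasure \<nu> (S t)) \<in> borel_measurable lborel"
  proof -
    define Q where "Q = {p \<in> space (lborel \<Otimes>\<^sub>M \<nu>). fst p < h (snd p)}"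
    have "Q \<in> sets (lborel \<Otimes>\<^sub>M \<nu>)" unfolding Q_def by measurable
    from nu.measurable_emeasure_Pair[OF this]
    have "(\<lambda>t. emeasure \<nu> (Pair t -` Q)) \<in> borel_measurable lborel" .
    moreover have "Pair t -` Q = S t" for t
      by (auto simp: Q_def S_def space_pair_measure spnu)
    ultimately show ?thesis by simp
  qed
  have "(\<integral>\<^sup>+t. indicator {0..1} t * emeasure \<mu> (S t) \<partial>lborel)
      \<le> (\<integral>\<^sup>+t. indicator {0..1} t * emeasure \<nu> (S t) + indicator {0..1} t * ennreal c \<partial>lborel)"
  proof (rule nn_integral_mono)
    fix t
    have "measure \<mu> (S t) \<le> measure \<nu> (S t) + c" using W[OF S] .
    then have "emeasure \<mu> (S t) \<le> emeasure \<nu> (S t) + ennreal c"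
      using c by (simp add: mu.emeasure_eq_measure nu.emeasure_eq_measure ennreal_plus[symmetric] del: ennreal_plus)
    then show "indicator {0..1} t * emeasure \<mu> (S t) \<le> indicator {0..1} t * emeasure \<nu> (S t) + indicator {0..1} t * ennreal c"
      by (auto simp: indicator_def)
  qed
  also have "\<dots> = (\<integral>\<^sup>+t. indicator {0..1} t * emeasure \<nu> (S t) \<partial>lborel) + (\<integral>\<^sup>+(t::real). indicator {0..1} t * ennreal c \<partial>lborel)"
    proof (rule nn_integral_add)
    show "(\<lambda>t. indicator {0..1} t * emeasure \<nu> (S t)) \<in> borel_measurable lborel"
      using meas by measurable
  qed simp
  also have "(\<integral>\<^sup>+(t::real). indicator {0..1} t * ennreal c \<partial>lborel) = ennreal c"
    by (simp add: nn_integral_cmult_indicator mult.commute)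
  finally have le: "(\<integral>\<^sup>+x. ennreal (h x) \<partial>\<mu>) \<le> (\<integral>\<^sup>+x. ennreal (h x) \<partial>\<nu>) + ennreal c"
    using lc_mu lc_nu by simp
  have fin: "(\<integral>\<^sup>+x. ennreal (h x) \<partial>\<nu>) \<le> 1"
  proof -
    have "(\<integral>\<^sup>+x. ennreal (h x) \<partial>\<nu>) \<le> (\<integral>\<^sup>+x. 1 \<partial>\<nu>)"
      by (rule nn_integral_mono) (use h1 in auto)
    then show ?thesis by (simp add: nu.emeasure_space_1)
  qed
  have fin': "(\<integral>\<^sup>+x. ennreal (h x) \<partial>\<nu>) < \<top>"
    using fin by (auto simp: less_top[symmetric] top_unique)
  have "(\<integral>x. h x \<partial>\<mu>) = enn2real (\<integral>\<^sup>+x. ennreal (h x) \<partial>\<mu>)"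
    by (rule integral_eq_nn_integral) (use h0 in auto)
  also have "\<dots> \<le> enn2real ((\<integral>\<^sup>+x. ennreal (h x) \<partial>\<nu>) + ennreal c)"
    by (rule enn2real_mono[OF le]) (use fin in \<open>auto simp: less_top[symmetric] top_unique\<close>)
  also have "\<dots> = enn2real (\<integral>\<^sup>+x. ennreal (h x) \<partial>\<nu>) + c"
    using fin' c by (subst enn2real_plus) auto
  also have "enn2real (\<integral>\<^sup>+x. ennreal (h x) \<partial>\<nu>) = (\<integral>x. h x \<partial>\<nu>)"
    by (rule integral_eq_nn_integral[symmetric]) (use h0 in auto)
  finally show ?thesis .
qed


lemma qo_prob: "prob_space (query_oracle P X)"
  unfolding query_oracle_def by (rule prob_space_PiM) (simp add: prob_space_measure_pmf)

lemma qo_sets: "sets (query_oracle P X) = sets transcript_space"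
  unfolding query_oracle_def transcript_space_def by (rule sets_PiM_cong) auto

lemma adv_facts:
  assumes A: "A \<in> adversaries M"
  shows "(\<lambda>(m, \<omega>). A m \<omega>) \<in> borel_measurable (M \<Otimes>\<^sub>M query_oracle P X)"
    and "\<And>m \<omega>. 0 \<le> A m \<omega>" and "\<And>m \<omega>. A m \<omega> \<le> 1"
proof -
  have "sets (M \<Otimes>\<^sub>M query_oracle P X) = sets (M \<Otimes>\<^sub>M transcript_space)"
    by (rule sets_pair_measure_cong) (auto simp: qo_sets)
  then show "(\<lambda>(m, \<omega>). A m \<omega>) \<in> borel_measurable (M \<Otimes>\<^sub>M query_oracle P X)"
    using A unfolding adversaries_def by (simp cong: measurable_cong_sets)
  show "\<And>m \<omega>. 0 \<le> A m \<omega>" "\<And>m \<omega>. A m \<omega> \<le> 1" using A unfolding adversaries_def by auto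
qed

lemma g_facts:
  assumes A: "A \<in> adversaries M"
  shows "(\<lambda>m. \<integral>\<omega>. A m \<omega> \<partial>query_oracle P X) \<in> borel_measurable M"
    and "\<And>m. 0 \<le> (\<integral>\<omega>. A m \<omega> \<partial>query_oracle P X)"
    and "\<And>m. (\<integral>\<omega>. A m \<omega> \<partial>query_oracle P X) \<le> 1"
proof -
  interpret O: prob_space "query_oracle P X" by (rule qo_prob)
  note f = adv_facts(1)[OF A, where P=P and X=X] adv_facts(2,3)[OF A]
  show "(\<lambda>m. \<integral>\<omega>. A m \<omega> \<partial>query_oracle P X) \<in> borel_measurable M"
    by (rule O.borel_measurable_lebesgue_integral) (use f(1) in simp)
  show "\<And>m. 0 \<le> (\<integral>\<omega>. A m \<omega> \<partial>query_oracle P X)"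
    using f(2) by (simp add: integral_nonneg)
  fix m
  show "(\<integral>\<omega>. A m \<omega> \<partial>query_oracle P X) \<le> 1"
  proof (cases "integrable (query_oracle P X) (A m)")
    case True
    then show ?thesis by (rule O.integral_le_const) (use f(3) in auto)
  qed (simp add: not_integrable_integral_eq)
qed

lemma out1_eq:
  assumes A: "A \<in> adversaries M" and mu: "\<mu> \<in> space (prob_algebra M)"
  shows "out1_prob A \<mu> (query_oracle P X) = (\<integral>m. (\<integral>\<omega>. A m \<omega> \<partial>query_oracle P X) \<partial>\<mu>)"
proof -
  interpret O: prob_space "query_oracle P X" by (rule qo_prob)
  have pm: "prob_space \<mu>" and sm: "sets \<mu> = sets M" using mu by (auto simp: space_prob_algebra)
  interpret mu: prob_space \<mu> by fact
  interpret PS: pair_sigma_finite \<mu> "query_oracle P X" by unfold_locales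
  interpret PP: prob_space "\<mu> \<Otimes>\<^sub>M query_oracle P X" by (rule prob_space_pair) (fact, rule qo_prob)
  note f = adv_facts(1)[OF A, where P=P and X=X] adv_facts(2,3)[OF A]
  have "sets (\<mu> \<Otimes>\<^sub>M query_oracle P X) = sets (M \<Otimes>\<^sub>M query_oracle P X)"
    by (rule sets_pair_measure_cong) (auto simp: sm)
  then have meas: "(\<lambda>(m, \<omega>). A m \<omega>) \<in> borel_measurable (\<mu> \<Otimes>\<^sub>M query_oracle P X)"
    using f(1) by (simp cong: measurable_cong_sets)
  have int: "integrable (\<mu> \<Otimes>\<^sub>M query_oracle P X) (\<lambda>(m, \<omega>). A m \<omega>)"
    by (rule PP.integrable_const_bound[where B=1]) (use f(2,3) meas in auto)
  show ?thesis
    unfolding out1_prob_def using PS.integral_fst[OF int] by simp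
qed

lemma arith_bound:
  fixes a b e d :: real
  assumes "a \<le> e*b + d" "1-b \<le> e*(1-a)+d" "0 \<le> e"
  shows "a \<le> b + (e - 1 + 2*d)/(e+1)"
proof -
  have "(e+1)*(a-b) \<le> e - 1 + 2*d" using assms by (simp add: algebra_simps)
  then have "a - b \<le> (e - 1 + 2*d)/(e+1)" using assms(3) by (simp add: pos_le_divide_eq mult.commute)
  then show ?thesis by simp
qed

lemma unl_space:
  assumes LS: "\<And>X. X \<subseteq> D \<Longrightarrow> Learn X \<in> space (prob_algebra M)"
    and US: "\<And>F. F \<subseteq> D \<Longrightarrow> (\<lambda>m. Unlearn m F) \<in> M \<rightarrow>\<^sub>M prob_algebra M"
    and "R \<subseteq> D" "F \<subseteq> D"
  shows "unlearned_dist Learn Unlearn R F \<in> space (prob_algebra M)"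
proof -
  have a: "Learn (R \<union> F) \<in> space (prob_algebra M)" using LS assms by auto
  have b: "(\<lambda>m. Unlearn m F) \<in> M \<rightarrow>\<^sub>M prob_algebra M" using US assms by auto
  show ?thesis unfolding unlearned_dist_def space_prob_algebra
    using prob_space_bind'[OF a b] sets_bind'[OF a b] by simp
qed

lemma pair_bound:
  assumes LS: "\<And>X. X \<subseteq> D \<Longrightarrow> Learn X \<in> space (prob_algebra M)"
    and US: "\<And>F. F \<subseteq> D \<Longrightarrow> (\<lambda>m. Unlearn m F) \<in> M \<rightarrow>\<^sub>M prob_algebra M"
    and CR: "certified_removal M Learn Unlearn D \<epsilon> \<delta>" and d: "0 < \<delta>" and e: "0 < \<epsilon>"
    and RF: "R \<subseteq> D" "F \<subseteq> D" "R \<inter> F = {}"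
    and g: "g \<in> borel_measurable M" "\<And>x. 0 \<le> g x" "\<And>x. g x \<le> 1"
  shows "\<bar>(\<integral>x. g x \<partial>unlearned_dist Learn Unlearn R F) - (\<integral>x. g x \<partial>Learn R)\<bar>
           \<le> (exp \<epsilon> - 1 + 2*\<delta>)/(exp \<epsilon> + 1)"
proof -
  let ?U = "unlearned_dist Learn Unlearn R F" and ?L = "Learn R"
  let ?c = "(exp \<epsilon> - 1 + 2*\<delta>)/(exp \<epsilon> + 1)"
  have U: "?U \<in> space (prob_algebra M)" by (rule unl_space[OF LS US RF(1,2)])
  have L: "?L \<in> space (prob_algebra M)" using LS RF by auto
  have pU: "prob_space ?U" and sU: "sets ?U = sets M" using U by (auto simp: space_prob_algebra)
  have pL: "prob_space ?L" and sL: "sets ?L = sets M" using L by (auto simp: space_prob_algebra)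
  have spU: "space ?U = space M" using sets_eq_imp_space_eq[OF sU] .
  have spL: "space ?L = space M" using sets_eq_imp_space_eq[OF sL] .
  have c0: "0 \<le> ?c" using d e by (auto intro!: divide_nonneg_pos add_nonneg_nonneg simp: add_pos_pos)
  have cr: "measure ?U W \<le> exp \<epsilon> * measure ?L W + \<delta> \<and> measure ?L W \<le> exp \<epsilon> * measure ?U W + \<delta>"
    if "W \<in> sets M" for W
    using CR RF that unfolding certified_removal_def by blast
  have compU: "measure ?U (space M - W) = 1 - measure ?U W" if "W \<in> sets M" for W
    using prob_space.prob_compl[OF pU, of W] that sU spU by simp
  have compL: "measure ?L (space M - W) = 1 - measure ?L W" if "W \<in> sets M" for W
    using prob_space.prob_compl[OF pL, of W] that sL spL by simp
  have b1: "measure ?U W \<le> measure ?L W + ?c" if W: "W \<in> sets M" for W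
  proof (rule arith_bound)
    show "measure ?U W \<le> exp \<epsilon> * measure ?L W + \<delta>" using cr[OF W] by simp
    have "space M - W \<in> sets M" using W by auto
    from cr[OF this] show "1 - measure ?L W \<le> exp \<epsilon> * (1 - measure ?U W) + \<delta>"
      using compU[OF W] compL[OF W] by simp
  qed simp
  have b2: "measure ?L W \<le> measure ?U W + ?c" if W: "W \<in> sets M" for W
  proof (rule arith_bound)
    show "measure ?L W \<le> exp \<epsilon> * measure ?U W + \<delta>" using cr[OF W] by simp
    have "space M - W \<in> sets M" using W by auto
    from cr[OF this] show "1 - measure ?U W \<le> exp \<epsilon> * (1 - measure ?L W) + \<delta>"
      using compU[OF W] compL[OF W] by simp
  qed simp
  have "(\<integral>x. g x \<partial>?U) \<le> (\<integral>x. g x \<partial>?L) + ?c"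
    by (rule fun_bound[OF pU pL sU sL c0 b1 g])
  moreover have "(\<integral>x. g x \<partial>?L) \<le> (\<integral>x. g x \<partial>?U) + ?c"
    by (rule fun_bound[OF pL pU sL sU c0 b2 g])
  ultimately show ?thesis by linarith
qed

lemma splits_swap:
  assumes fin: "finite D" and s: "(R, F, T) \<in> splits D \<alpha>"
  shows "(R, T, F) \<in> splits D \<alpha>"
proof -
  from s have d: "R \<union> F \<union> T = D" "R \<inter> F = {}" "R \<inter> T = {}" "F \<inter> T = {}"
    and r: "real (card F) / real (card (R \<union> F)) = \<alpha>" and c: "card F = card T"
    unfolding splits_def by auto
  have fR: "finite R" "finite F" "finite T" using fin d(1) by (auto intro: finite_subset)
  have "card (R \<union> T) = card (R \<union> F)"
    using fR d by (simp add: card_Un_disjoint c)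
  then show ?thesis using d r c unfolding splits_def by auto
qed

theorem theorem3p6:
  fixes M :: "'m measure" and D :: "'d set" and P :: "'d pmf" and \<alpha> \<epsilon> \<delta> :: real
    and Learn :: "'d set \<Rightarrow> 'm measure" and Unlearn :: "'m \<Rightarrow> 'd set \<Rightarrow> 'm measure"
  assumes "finite D" and "set_pmf P = D"
    and "0 < \<alpha>" and "\<alpha> < 1" and "splits D \<alpha> \<noteq> {}"
    and "\<And>X. X \<subseteq> D \<Longrightarrow> Learn X \<in> space (prob_algebra M)"
    and "\<And>F. F \<subseteq> D \<Longrightarrow> (\<lambda>m. Unlearn m F) \<in> M \<rightarrow>\<^sub>M prob_algebra M"
    and "0 < \<epsilon>" and "0 < \<delta>"
    and "certified_removal M Learn Unlearn D \<epsilon> \<delta>"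
  shows "(\<forall>A\<in>adversaries M.
            advantage D P \<alpha> Learn Unlearn A \<le> 2 * (1 - (2 - 2 * \<delta>) / (exp \<epsilon> + 1)))
         \<and> quality M D P \<alpha> Learn Unlearn \<ge> (4 - 4 * \<delta>) / (exp \<epsilon> + 1) - 1"
  proof -
  note LS = assms(6) and US = assms(7) and CR = assms(10)
  define c where "c = (exp \<epsilon> - 1 + 2*\<delta>)/(exp \<epsilon> + 1)"
  have ceq: "2 * c = 2 * (1 - (2 - 2 * \<delta>) / (exp \<epsilon> + 1))"
  proof -
    have "exp \<epsilon> + 1 > 0" by (simp add: add_pos_pos)
    then show ?thesis unfolding c_def by (simp add: field_simps)
  qed
  define S where "S = splits D \<alpha>"
  have finS: "finite S"
  proof -
    have "S \<subseteq> Pow D \<times> Pow D \<times> Pow D" unfolding S_def splits_def by auto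
    then show ?thesis using assms(1) by (auto intro: finite_subset)
  qed
  have Sne: "S \<noteq> {}" using assms(5) by (simp add: S_def)
  have Npos: "0 < real (card S)" using finS Sne by (simp add: card_gt_0_iff)
  have inS: "R \<subseteq> D \<and> F \<subseteq> D \<and> T \<subseteq> D \<and> R \<inter> F = {} \<and> R \<inter> T = {}" if "(R, F, T) \<in> S" for R F T
    using that unfolding S_def splits_def by auto
  have key: "advantage D P \<alpha> Learn Unlearn A \<le> 2 * c" if A: "A \<in> adversaries M" for A
  proof -
    let ?U = "unlearned_dist Learn Unlearn"
    let ?g = "\<lambda>X m. \<integral>\<omega>. A m \<omega> \<partial>query_oracle P X"
    define x :: "'d set \<times> 'd set \<times> 'd set \<Rightarrow> real" where "x = (\<lambda>(R, F, T). out1_prob A (?U R F) (query_oracle P F))"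
    define y :: "'d set \<times> 'd set \<times> 'd set \<Rightarrow> real" where "y = (\<lambda>(R, F, T). out1_prob A (?U R F) (query_oracle P T))"
    define y' :: "'d set \<times> 'd set \<times> 'd set \<Rightarrow> real" where "y' = (\<lambda>(R, F, T). out1_prob A (?U R T) (query_oracle P F))"
    have sw: "sum y S = sum y' S"
      by (rule sum.reindex_bij_witness[where i="\<lambda>(R, F, T). (R, T, F)" and j="\<lambda>(R, F, T). (R, T, F)"])
         (auto simp: y_def y'_def S_def intro: splits_swap[OF assms(1)])
    have each: "\<bar>x s - y' s\<bar> \<le> 2 * c" if s: "s \<in> S" for s
    proof -
      obtain R F T where st: "s = (R, F, T)" by (cases s) auto
      have sub: "R \<subseteq> D" "F \<subseteq> D" "T \<subseteq> D" "R \<inter> F = {}" "R \<inter> T = {}" using inS s st by auto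
      note gf = g_facts[OF A, where P=P and X=F]
      have e1: "x s = (\<integral>m. ?g F m \<partial>?U R F)"
        unfolding st x_def by (simp add: out1_eq[OF A unl_space[OF LS US sub(1,2)]])
      have e2: "y' s = (\<integral>m. ?g F m \<partial>?U R T)"
        unfolding st y'_def by (simp add: out1_eq[OF A unl_space[OF LS US sub(1,3)]])
      have p1: "\<bar>(\<integral>m. ?g F m \<partial>?U R F) - (\<integral>m. ?g F m \<partial>Learn R)\<bar> \<le> c"
        unfolding c_def by (rule pair_bound[OF LS US CR assms(9) assms(8) sub(1,2,4) gf])
      have p2: "\<bar>(\<integral>m. ?g F m \<partial>?U R T) - (\<integral>m. ?g F m \<partial>Learn R)\<bar> \<le> c"
        unfolding c_def by (rule pair_bound[OF LS US CR assms(9) assms(8) sub(1,3,5) gf])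
      show ?thesis using p1 p2 e1 e2 by linarith
    qed
    have "\<bar>sum x S - sum y S\<bar> = \<bar>\<Sum>s\<in>S. x s - y' s\<bar>"
      by (simp add: sw sum_subtractf)
    also have "\<dots> \<le> (\<Sum>s\<in>S. \<bar>x s - y' s\<bar>)" by (rule sum_abs)
    also have "\<dots> \<le> (\<Sum>s\<in>S. 2 * c)" by (rule sum_mono) (rule each)
    also have "\<dots> = real (card S) * (2 * c)" by simp
    finally have bnd: "\<bar>sum x S - sum y S\<bar> \<le> real (card S) * (2 * c)" .
    have "advantage D P \<alpha> Learn Unlearn A = (1 / real (card S)) * \<bar>sum x S - sum y S\<bar>"
      unfolding advantage_def S_def x_def y_def by simp
    also have "\<dots> \<le> 2 * c" using bnd Npos by (simp add: divide_le_eq mult.commute)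
    finally show ?thesis .
  qed
  have part1: "\<forall>A\<in>adversaries M. advantage D P \<alpha> Learn Unlearn A \<le> 2 * (1 - (2 - 2 * \<delta>) / (exp \<epsilon> + 1))"
    using key ceq by simp
  have ne: "adversaries M \<noteq> {}"
  proof -
    have "(\<lambda>_ _. 0::real) \<in> adversaries M" unfolding adversaries_def by auto
    then show ?thesis by auto
  qed
  have "(SUP A\<in>adversaries M. advantage D P \<alpha> Learn Unlearn A) \<le> 2 * c"
    by (rule cSUP_least[OF ne key])
  then have "quality M D P \<alpha> Learn Unlearn \<ge> 1 - 2 * c" unfolding quality_def by simp
  moreover have "1 - 2 * c = (4 - 4 * \<delta>) / (exp \<epsilon> + 1) - 1"
  proof -
    have "exp \<epsilon> + 1 > 0" by (simp add: add_pos_pos)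
    then show ?thesis unfolding c_def by (simp add: field_simps)
  qed
  ultimately show ?thesis using part1 by simp
qed

end
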